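(* Let $V$ be an $\mathcal{H}$-module vertex algebra and let $W$ be a $(V,\mathcal{H})$-module. Set $W^{\mathcal{H}}=\{w\in W\mid L_1^{(n)}w=0=L_{-1}^{(n)}w \text{ for all } n\ge1\}$. Then the assignment $f\mapsto f(\mathbf{1})$ is a linear isomorphism from $\mathrm{Hom}_{(V,\mathcal{H})}(V,W)$ onto $W^{\mathcal{H}}$. Furthermore, $W^{\mathcal{H}}\subset W_0$.
   Context: Throughout, $\mathbb{F}$ is an algebraically closed field of odd prime characteristic $p$; vertex algebras and modules are over $\mathbb{F}$. Every vertex algebra $V$ is a module for the bialgebra $\mathcal{B}$ with basis $\{\mathcal{D}^{(n)}\}_{n\in\mathbb{N}}$, $\mathcal{D}^{(m)}\mathcal{D}^{(n)}=\binom{m+n}{n}\mathcal{D}^{(m+n)}$, via $\mathcal{D}^{(n)}v=v_{-n-1}\mathbf{1}$. $\mathcal{H}$: let $\mathfrak{sl}_2$ over $\mathbb{C}$ have basis $L_{-1},L_0,L_1$ with $[L_1,L_{-1}]=2L_0$, $[L_0,L_{\pm1}]=\mp L_{\pm1}$; put $L_{\pm1}^{(n)}=L_{\pm1}^n/n!$, $L_0^{(n)}=\binom{-2L_0}{n}$ in $U(\mathfrak{sl}_2)$; $U(\mathfrak{sl}_2)_{\mathbb{Z}}$ is the $\mathbb{Z}$-span of the $L_{-1}^{(i)}L_0^{(j)}L_1^{(k)}$, and $\mathcal{H}=\mathbb{F}\otimes_{\mathbb{Z}}U(\mathfrak{sl}_2)_{\mathbb{Z}}$. $e^{zL_{\pm1}}=\sum_{n\ge0}z^nL_{\pm1}^{(n)}$.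 For $v$ homogeneous of degree $n$, $f(z)^{\deg}v:=f(z)^nv$, extended linearly. A $\mathbb{Z}$-graded vertex algebra: $V=\bigoplus V_n$, $\mathbf{1}\in V_0$, $u_rV_n\subset V_{m+n-r-1}$ for $u\in V_m$. A $\mathbb{Z}$-graded weight $\mathcal{H}$-module: $W=\bigoplus W_n$ with $\mathcal{H}$-action, $L_{\pm1}^{(r)}W_n\subset W_{n\mp r}$, $L_0^{(r)}|_{W_n}=\binom{-2n}{r}$. An $\mathcal{H}$-module vertex algebra: a $\mathbb{Z}$-graded vertex algebra $V$ which is a $\mathbb{Z}$-graded weight $\mathcal{H}$-module with $L_{-1}^{(n)}=\mathcal{D}^{(n)}$, such that $V_n=0$ for $n\ll0$, $L_1^{(n)}\mathbf{1}=\delta_{n,0}\mathbf{1}$, and $e^{zL_1}Y(v,z_0)e^{-zL_1}=Y\bigl(e^{z(1-zz_0)L_1}(1-zz_0)^{-2\deg}v,z_0/(1-zz_0)\bigr)$ for $v\in V$. A $(V,\mathcal{H})$-module: a $\mathbb{Z}$-graded weight $\mathcal{H}$-module $W$ which is a $\mathbb{Z}$-graded $V$-module ($v_mW_n\subset W_{k+n-m-1}$ for $v\in V_k$) satisfying $e^{zL_{-1}}Y_W(v,x)e^{-zL_{-1}}=Y_W(e^{zL_{-1}}v,x)$ and $e^{zL_1}Y_W(v,z_0)e^{-zL_1}=Y_W\bigl(e^{z(1-zz_0)L_1}(1-zz_0)^{-2\deg}v,z_0/(1-zz_0)\bigr)$. $\mathrm{Hom}_{(V,\mathcal{H})}(V,W)$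 is the space of linear maps that are both $V$-module and $\mathcal{H}$-module homomorphisms. *)

theory Defs
  imports Main "HOL-Computational_Algebra.Polynomial"
begin

definition fsum :: "('i \<Rightarrow> 'b::comm_monoid_add) \<Rightarrow> 'b" where
  "fsum f = sum f {i. f i \<noteq> 0}"

definition sgnpow :: "int \<Rightarrow> int" where
  "sgnpow l = (if even l then 1 else -1)"

definition ibinom :: "int \<Rightarrow> nat \<Rightarrow> int" where
  "ibinom l i = (\<Prod>j<i. l - int j) div fact i"

section \<open>Z-graded vector spaces (given by the projections onto the W_n)\<close>

definition graded ::
  "('a::field \<Rightarrow> 'w::ab_group_add \<Rightarrow> 'w) \<Rightarrow> (int \<Rightarrow> 'w \<Rightarrow> 'w) \<Rightarrow> bool" where
  "graded s pr \<longleftrightarrow> vector_space s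
     \<and> (\<forall>n. Vector_Spaces.linear s s (pr n))
     \<and> (\<forall>x. finite {n. pr n x \<noteq> 0})
     \<and> (\<forall>x. fsum (\<lambda>n. pr n x) = x)
     \<and> (\<forall>n m x. pr n (pr m x) = (if n = m then pr m x else 0))"

definition hcomp :: "(int \<Rightarrow> 'w \<Rightarrow> 'w) \<Rightarrow> int \<Rightarrow> 'w set" where
  "hcomp pr n = {x. pr n x = x}"

text \<open>Lm r = L_{-1}^{(r)}, Lp r = L_1^{(r)}; L_0^{(r)} acts on W_n by binom(-2n, r).\<close>

definition L0 :: "('a::field \<Rightarrow> 'w::ab_group_add \<Rightarrow> 'w) \<Rightarrow> (int \<Rightarrow> 'w \<Rightarrow> 'w) \<Rightarrow> nat \<Rightarrow> 'w \<Rightarrow> 'w" where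
  "L0 s pr r x = fsum (\<lambda>n::int. s (of_int (ibinom (- 2 * n) r)) (pr n x))"

definition weight_H_module ::
  "('a::field \<Rightarrow> 'w::ab_group_add \<Rightarrow> 'w) \<Rightarrow> (int \<Rightarrow> 'w \<Rightarrow> 'w)
    \<Rightarrow> (nat \<Rightarrow> 'w \<Rightarrow> 'w) \<Rightarrow> (nat \<Rightarrow> 'w \<Rightarrow> 'w) \<Rightarrow> bool" where
  "weight_H_module s pr Lm Lp \<longleftrightarrow> graded s pr
     \<and> (\<forall>r. Vector_Spaces.linear s s (Lm r) \<and> Vector_Spaces.linear s s (Lp r))
     \<and> (\<forall>x. Lm 0 x = x \<and> Lp 0 x = x)
     \<and> (\<forall>a b x. Lm a (Lm b x) = s (of_nat ((a + b) choose b)) (Lm (a + b) x))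
     \<and> (\<forall>a b x. Lp a (Lp b x) = s (of_nat ((a + b) choose b)) (Lp (a + b) x))
     \<and> (\<forall>n r x. x \<in> hcomp pr n \<longrightarrow>
            Lm r x \<in> hcomp pr (n + int r) \<and> Lp r x \<in> hcomp pr (n - int r))
     \<and> (\<forall>n a b x. x \<in> hcomp pr n \<longrightarrow>
            Lp a (Lm b x) =
              (\<Sum>j\<le>min a b. s (of_int ((-1) ^ j * (ibinom (- 2 * n + int a - int b) j)))
                                (Lm (b - j) (Lp (a - j) x))))"

section \<open>Vertex algebras and modules (Y(v,x) = sum_m v_m x^{-m-1}; Y v m w = v_m w)\<close>

definition truncation :: "('v \<Rightarrow> int \<Rightarrow> 'w \<Rightarrow> 'w::zero) \<Rightarrow> bool" where
  "truncation Y \<longleftrightarrow> (\<forall>u w. \<exists>N. \<forall>m\<ge>N. Y u m w = 0)"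

definition jacobi ::
  "('a::field \<Rightarrow> 'w::ab_group_add \<Rightarrow> 'w) \<Rightarrow> ('v \<Rightarrow> int \<Rightarrow> 'v \<Rightarrow> 'v) \<Rightarrow> ('v \<Rightarrow> int \<Rightarrow> 'w \<Rightarrow> 'w) \<Rightarrow> bool" where
  "jacobi s YV YW \<longleftrightarrow> (\<forall>u v w l m n.
     fsum (\<lambda>i::nat. s (of_int (ibinom m i)) (YW (YV u (l + int i) v) (m + n - int i) w))
     = fsum (\<lambda>i::nat. s (of_int ((-1) ^ i * (ibinom l i))) (YW u (m + l - int i) (YW v (n + int i) w)))
       - s (of_int (sgnpow l))
           (fsum (\<lambda>i::nat. s (of_int ((-1) ^ i * (ibinom l i))) (YW v (n + l - int i) (YW u (m + int i) w)))))"

definition va_module ::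
  "('a::field \<Rightarrow> 'v::ab_group_add \<Rightarrow> 'v) \<Rightarrow> ('v \<Rightarrow> int \<Rightarrow> 'v \<Rightarrow> 'v) \<Rightarrow> 'v
    \<Rightarrow> ('a \<Rightarrow> 'w::ab_group_add \<Rightarrow> 'w) \<Rightarrow> ('v \<Rightarrow> int \<Rightarrow> 'w \<Rightarrow> 'w) \<Rightarrow> bool" where
  "va_module sV YV vac sW YW \<longleftrightarrow> vector_space sW
     \<and> (\<forall>u m. Vector_Spaces.linear sW sW (YW u m))
     \<and> (\<forall>m w. Vector_Spaces.linear sV sW (\<lambda>u. YW u m w))
     \<and> truncation YW
     \<and> (\<forall>m w. YW vac m w = (if m = -1 then w else 0))
     \<and> jacobi sW YV YW"

definition vertex_algebra ::
  "('a::field \<Rightarrow> 'v::ab_group_add \<Rightarrow> 'v) \<Rightarrow> ('v \<Rightarrow> int \<Rightarrow> 'v \<Rightarrow> 'v) \<Rightarrow> 'v \<Rightarrow> bool" where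
  "vertex_algebra sV YV vac \<longleftrightarrow> vector_space sV
     \<and> va_module sV YV vac sV YV
     \<and> (\<forall>u m. m \<ge> 0 \<longrightarrow> YV u m vac = 0)
     \<and> (\<forall>u. YV u (-1) vac = u)"

definition Lm_conj ::
  "('a::field \<Rightarrow> 'w::ab_group_add \<Rightarrow> 'w) \<Rightarrow> ('v \<Rightarrow> int \<Rightarrow> 'w \<Rightarrow> 'w)
    \<Rightarrow> (nat \<Rightarrow> 'v \<Rightarrow> 'v) \<Rightarrow> (nat \<Rightarrow> 'w \<Rightarrow> 'w) \<Rightarrow> bool" where
  \<comment> \<open>coefficient of z^k x^{-m-1} in e^{zL_{-1}} Y_W(v,x) e^{-zL_{-1}} = Y_W(e^{zL_{-1}} v, x)\<close>
  "Lm_conj sW YW LmV LmW \<longleftrightarrow> (\<forall>v w k m.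
     (\<Sum>b\<le>k. sW (of_int ((-1) ^ b)) (LmW (k - b) (YW v m (LmW b w))))
     = YW (LmV k v) m w)"

definition Lp_conj ::
  "('a::field \<Rightarrow> 'w::ab_group_add \<Rightarrow> 'w) \<Rightarrow> (int \<Rightarrow> 'v \<Rightarrow> 'v) \<Rightarrow> ('v \<Rightarrow> int \<Rightarrow> 'w \<Rightarrow> 'w)
    \<Rightarrow> (nat \<Rightarrow> 'v \<Rightarrow> 'v) \<Rightarrow> (nat \<Rightarrow> 'w \<Rightarrow> 'w) \<Rightarrow> bool" where
  \<comment> \<open>coefficient of z^k z0^{-n-1} in
      e^{zL_1} Y(v,z0) e^{-zL_1} = Y(e^{z(1-z z0)L_1}(1-z z0)^{-2 deg} v, z0/(1-z z0)),
      for v homogeneous of degree d (the general case follows by linearity)\<close>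
  "Lp_conj sW prV YW LpV LpW \<longleftrightarrow> (\<forall>d v w k n. v \<in> hcomp prV d \<longrightarrow>
     (\<Sum>b\<le>k. sW (of_int ((-1) ^ b)) (LpW (k - b) (YW v n (LpW b w))))
     = (\<Sum>i\<le>k. sW (of_int ((-1) ^ i * (ibinom (int (k - i) - 2 * d + (n + int i) + 1) i)))
                   (YW (LpV (k - i) v) (n + int i) w)))"

definition H_module_VA ::
  "('a::field \<Rightarrow> 'v::ab_group_add \<Rightarrow> 'v) \<Rightarrow> ('v \<Rightarrow> int \<Rightarrow> 'v \<Rightarrow> 'v) \<Rightarrow> 'v
    \<Rightarrow> (int \<Rightarrow> 'v \<Rightarrow> 'v) \<Rightarrow> (nat \<Rightarrow> 'v \<Rightarrow> 'v) \<Rightarrow> (nat \<Rightarrow> 'v \<Rightarrow> 'v) \<Rightarrow> bool" where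
  "H_module_VA sV YV vac prV LmV LpV \<longleftrightarrow>
     vertex_algebra sV YV vac
     \<and> weight_H_module sV prV LmV LpV
     \<and> vac \<in> hcomp prV 0
     \<and> (\<forall>a b u v r. u \<in> hcomp prV a \<longrightarrow> v \<in> hcomp prV b \<longrightarrow> YV u r v \<in> hcomp prV (a + b - r - 1))
     \<and> (\<forall>n v. LmV n v = YV v (- int n - 1) vac)
     \<and> (\<exists>N. \<forall>n<N. hcomp prV n = {0})
     \<and> (\<forall>n. LpV n vac = (if n = 0 then vac else 0))
     \<and> Lp_conj sV prV YV LpV LpV"

definition VH_module ::
  "('a::field \<Rightarrow> 'v::ab_group_add \<Rightarrow> 'v) \<Rightarrow> ('v \<Rightarrow> int \<Rightarrow> 'v \<Rightarrow> 'v) \<Rightarrow> 'v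
    \<Rightarrow> (int \<Rightarrow> 'v \<Rightarrow> 'v) \<Rightarrow> (nat \<Rightarrow> 'v \<Rightarrow> 'v) \<Rightarrow> (nat \<Rightarrow> 'v \<Rightarrow> 'v)
    \<Rightarrow> ('a \<Rightarrow> 'w::ab_group_add \<Rightarrow> 'w) \<Rightarrow> ('v \<Rightarrow> int \<Rightarrow> 'w \<Rightarrow> 'w)
    \<Rightarrow> (int \<Rightarrow> 'w \<Rightarrow> 'w) \<Rightarrow> (nat \<Rightarrow> 'w \<Rightarrow> 'w) \<Rightarrow> (nat \<Rightarrow> 'w \<Rightarrow> 'w) \<Rightarrow> bool" where
  "VH_module sV YV vac prV LmV LpV sW YW prW LmW LpW \<longleftrightarrow>
     weight_H_module sW prW LmW LpW
     \<and> va_module sV YV vac sW YW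
     \<and> (\<forall>k n m v w. v \<in> hcomp prV k \<longrightarrow> w \<in> hcomp prW n \<longrightarrow> YW v m w \<in> hcomp prW (k + n - m - 1))
     \<and> Lm_conj sW YW LmV LmW
     \<and> Lp_conj sW prV YW LpV LpW"

definition Hom_VH ::
  "('a::field \<Rightarrow> 'v::ab_group_add \<Rightarrow> 'v) \<Rightarrow> ('v \<Rightarrow> int \<Rightarrow> 'v \<Rightarrow> 'v)
    \<Rightarrow> (int \<Rightarrow> 'v \<Rightarrow> 'v) \<Rightarrow> (nat \<Rightarrow> 'v \<Rightarrow> 'v) \<Rightarrow> (nat \<Rightarrow> 'v \<Rightarrow> 'v)
    \<Rightarrow> ('a \<Rightarrow> 'w::ab_group_add \<Rightarrow> 'w) \<Rightarrow> ('v \<Rightarrow> int \<Rightarrow> 'w \<Rightarrow> 'w)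
    \<Rightarrow> (int \<Rightarrow> 'w \<Rightarrow> 'w) \<Rightarrow> (nat \<Rightarrow> 'w \<Rightarrow> 'w) \<Rightarrow> (nat \<Rightarrow> 'w \<Rightarrow> 'w) \<Rightarrow> ('v \<Rightarrow> 'w) set" where
  "Hom_VH sV YV prV LmV LpV sW YW prW LmW LpW = {f.
     Vector_Spaces.linear sV sW f
     \<and> (\<forall>u m v. f (YV u m v) = YW u m (f v))
     \<and> (\<forall>r v. f (LmV r v) = LmW r (f v))
     \<and> (\<forall>r v. f (LpV r v) = LpW r (f v))
     \<and> (\<forall>r v. f (L0 sV prV r v) = L0 sW prW r (f v))}"

definition H_invariants :: "(nat \<Rightarrow> 'w \<Rightarrow> 'w::zero) \<Rightarrow> (nat \<Rightarrow> 'w \<Rightarrow> 'w) \<Rightarrow> 'w set" where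
  "H_invariants LmW LpW = {w. \<forall>n\<ge>1. LpW n w = 0 \<and> LmW n w = 0}"

end

theory Submission
  imports Defs
begin


lemma fsum_eq_sum:
  assumes "finite S" "{i. f i \<noteq> 0} \<subseteq> S"
  shows "fsum f = sum f S"
  unfolding fsum_def
  by (rule sum.mono_neutral_left) (use assms in auto)

lemma fsum_single:
  assumes "\<And>i. i \<noteq> i0 \<Longrightarrow> f i = 0"
  shows "fsum f = f i0"
  using fsum_eq_sum[of "{i0}" f] assms by auto

lemma fsum_zero:
  assumes "\<And>i. f i = 0"
  shows "fsum f = 0"
  using fsum_eq_sum[of "{}" f] assms by auto

lemma binom_pp_dvd:
  assumes "prime (p::nat)" "0 < k" "k < p ^ e"
  shows "p dvd (p ^ e choose k)"
proof (rule ccontr)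
  assume nd: "\<not> p dvd (p ^ e choose k)"
  obtain q where q: "p ^ e = Suc q" using assms by (cases "p^e") auto
  obtain k' where k': "k = Suc k'" using assms by (cases k) auto
  have "Suc q * (q choose k') = (Suc q choose Suc k') * Suc k'" by (rule Suc_times_binomial_eq)
  hence "(p ^ e choose k) * k = p ^ e * (q choose k')" using q k' by simp
  hence "p ^ e dvd (p ^ e choose k) * k" by simp
  moreover have "coprime (p ^ e) (p ^ e choose k)"
    using prime_imp_coprime[OF assms(1) nd] by simp
  ultimately have "p ^ e dvd k" using coprime_dvd_mult_right_iff by blast
  thus False using assms by (simp add: nat_dvd_not_less)
qed

lemma lucas_nd:
  assumes "prime (p::nat)" "n < p ^ e"
  shows "\<not> p dvd ((p ^ e + n) choose n)"
proof
  assume d: "p dvd ((p ^ e + n) choose n)"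
  have v: "(\<Sum>k\<le>n. (p^e choose k) * (n choose (n - k))) = (p^e + n) choose n"
    by (rule vandermonde)
  obtain X where X: "(\<Sum>k\<le>n. (p^e choose k) * (n choose (n - k))) = 1 + X" "p dvd X"
  proof (cases n)
    case 0 then show ?thesis using that[of 0] by simp
  next
    case (Suc m)
    have "(\<Sum>k\<le>n. (p^e choose k) * (n choose (n - k))) =
          1 + (\<Sum>k\<le>m. (p^e choose Suc k) * (n choose (n - Suc k)))"
      unfolding Suc by (subst sum.atMost_Suc_shift) simp
    moreover have "p dvd (\<Sum>k\<le>m. (p^e choose Suc k) * (n choose (n - Suc k)))"
    proof (rule dvd_sum)
      fix k assume "k \<in> {..m}"
      hence "0 < Suc k" "Suc k < p ^ e" using assms(2) Suc by auto
      hence "p dvd (p^e choose Suc k)" by (rule binom_pp_dvd[OF assms(1)])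
      thus "p dvd (p^e choose Suc k) * (n choose (n - Suc k))" by simp
    qed
    ultimately show ?thesis using that by blast
  qed
  from d v X(1) have "p dvd 1 + X" by simp
  with X(2) have "p dvd 1" using dvd_add_left_iff by blast
  thus False using assms(1) by simp
qed

lemma ibinom_0_0: "ibinom l 0 = 1" by (simp add: ibinom_def)
lemma ibinom_zero_pos: "i > 0 \<Longrightarrow> ibinom 0 i = 0"
proof -
  assume "i > 0"
  have h: "(\<Prod>j<i. (0::int) - int j) = 0" by (rule prod_zero) (use \<open>i > 0\<close> in auto)
  show ?thesis unfolding ibinom_def h by simp
qed

lemma prod_shift_fact: "(\<Prod>j<y. int x + 1 + int j) = fact y * int ((x + y) choose y)"
proof (induction y)
  case 0 then show ?case by simp
next
  case (Suc y)
  have e: "Suc (x + y) * ((x + y) choose y) = (Suc (x+y) choose Suc y) * Suc y"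
    by (rule Suc_times_binomial_eq)
  have "(\<Prod>j<Suc y. int x + 1 + int j) = fact y * int ((x + y) choose y) * (int x + 1 + int y)"
    using Suc by simp
  also have "\<dots> = fact y * int (Suc (x + y) * ((x + y) choose y))" by (simp add: algebra_simps)
  also have "\<dots> = fact y * int ((Suc (x+y) choose Suc y) * Suc y)" by (simp only: e)
  also have "\<dots> = fact (Suc y) * int ((x + Suc y) choose Suc y)" by (simp add: algebra_simps)
  finally show ?case .
qed

lemma ibinom_neg: "ibinom (- int x - 1) y = (-1) ^ y * int ((x + y) choose y)"
proof -
  have "(\<Prod>j<y. - int x - 1 - int j) = (\<Prod>j<y. (-1) * (int x + 1 + int j))"
    by (rule prod.cong) auto
  also have "\<dots> = (\<Prod>j<y. (-1::int)) * (\<Prod>j<y. int x + 1 + int j)"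
    by (rule prod.distrib)
  also have "\<dots> = (-1) ^ y * (\<Prod>j<y. int x + 1 + int j)"
    by simp
  finally have "(\<Prod>j<y. - int x - 1 - int j) = (-1) ^ y * int ((x + y) choose y) * fact y"
    by (simp add: prod_shift_fact)
  thus ?thesis unfolding ibinom_def by simp
qed

lemma ibinom_self: "ibinom (int M) M = 1"
proof -
  have "(\<Prod>j<M. int M - int j) = (\<Prod>j = 0..<M. int (M - j))"
    by (rule prod.cong) (auto simp: lessThan_atLeast0)
  also have "\<dots> = fact M" by (simp add: fact_prod_rev)
  finally show ?thesis unfolding ibinom_def by simp
qed



lemma lin_zero: "Vector_Spaces.linear s1 s2 T \<Longrightarrow> T 0 = 0"
proof -
  assume "Vector_Spaces.linear s1 s2 T"
  hence "T (0 + 0) = T 0 + T 0" unfolding Vector_Spaces.linear_iff by blast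
  thus "T 0 = 0" by simp
qed

lemma lin_add: "Vector_Spaces.linear s1 s2 T \<Longrightarrow> T (x + y) = T x + T y"
  unfolding Vector_Spaces.linear_iff by blast

lemma lin_scale: "Vector_Spaces.linear s1 s2 T \<Longrightarrow> T (s1 c x) = s2 c (T x)"
  unfolding Vector_Spaces.linear_iff by blast

lemma lin_sum: "Vector_Spaces.linear s1 s2 T \<Longrightarrow> T (sum g A) = (\<Sum>a\<in>A. T (g a))"
  by (induct A rule: infinite_finite_induct) (simp_all add: lin_zero lin_add)

lemma graded_vs: "graded s pr \<Longrightarrow> vector_space s"
  unfolding graded_def by blast

lemma graded_lin: "graded s pr \<Longrightarrow> Vector_Spaces.linear s s (pr n)"
  unfolding graded_def by blast

lemma graded_fin: "graded s pr \<Longrightarrow> finite {n. pr n x \<noteq> 0}"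
  unfolding graded_def by blast

lemma graded_idem: "graded s pr \<Longrightarrow> pr n (pr m x) = (if n = m then pr m x else 0)"
  unfolding graded_def by blast

lemma graded_hcomp: "graded s pr \<Longrightarrow> pr n x \<in> hcomp pr n"
  unfolding hcomp_def using graded_idem[of s pr n n x] by simp

lemma graded_decomp: "graded s pr \<Longrightarrow> (\<Sum>n\<in>{n. pr n x \<noteq> 0}. pr n x) = x"
proof -
  assume "graded s pr"
  hence "fsum (\<lambda>n. pr n x) = x" unfolding graded_def by blast
  thus ?thesis unfolding fsum_def .
qed

lemma graded_map:
  assumes g1: "graded s1 pr1" and g2: "graded s2 pr2" and T: "Vector_Spaces.linear s1 s2 T"
    and hom: "\<And>k y. y \<in> hcomp pr1 k \<Longrightarrow> T y \<in> hcomp pr2 (k + d)"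
  shows "pr2 (n + d) (T x) = T (pr1 n x)"
proof -
  define S where "S = {k. pr1 k x \<noteq> 0}"
  have fS: "finite S" unfolding S_def by (rule graded_fin[OF g1])
  have e: "(\<Sum>k\<in>S. pr1 k x) = x" unfolding S_def by (rule graded_decomp[OF g1])
  have "T x = T (\<Sum>k\<in>S. pr1 k x)" by (simp only: e)
  also have "\<dots> = (\<Sum>k\<in>S. T (pr1 k x))" by (rule lin_sum[OF T])
  finally have "T x = (\<Sum>k\<in>S. T (pr1 k x))" .
  hence "pr2 (n + d) (T x) = (\<Sum>k\<in>S. pr2 (n + d) (T (pr1 k x)))"
    using lin_sum[OF graded_lin[OF g2]] by simp
  also have "\<dots> = (\<Sum>k\<in>S. if k = n then T (pr1 k x) else 0)"
  proof (rule sum.cong)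
    fix k assume "k \<in> S"
    have h: "T (pr1 k x) \<in> hcomp pr2 (k + d)" by (rule hom) (rule graded_hcomp[OF g1])
    hence "pr2 (n + d) (T (pr1 k x)) = pr2 (n + d) (pr2 (k + d) (T (pr1 k x)))"
      unfolding hcomp_def by simp
    also have "\<dots> = (if k = n then T (pr1 k x) else 0)"
      using h unfolding graded_idem[OF g2] hcomp_def by auto
    finally show "pr2 (n + d) (T (pr1 k x)) = (if k = n then T (pr1 k x) else 0)" .
  qed simp
  also have "\<dots> = T (pr1 n x)"
    using fS by (simp add: sum.delta S_def lin_zero[OF T])
  finally show ?thesis .
qed

lemma L0_eq_sum:
  assumes g: "graded s pr" and fS: "finite S" and sub: "{n. pr n x \<noteq> 0} \<subseteq> S"
  shows "L0 s pr r x = (\<Sum>n\<in>S. s (of_int (ibinom (- 2 * n) r)) (pr n x))"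
proof -
  interpret vector_space s by (rule graded_vs[OF g])
  show ?thesis unfolding L0_def
    by (rule fsum_eq_sum[OF fS]) (use sub in auto)
qed

lemma L0_lin:
  assumes g: "graded s pr"
  shows "Vector_Spaces.linear s s (L0 s pr r)"
proof -
  interpret vector_space s by (rule graded_vs[OF g])
  show ?thesis unfolding Vector_Spaces.linear_iff
  proof (intro conjI allI)
    show "vector_space s" by unfold_locales
    show "vector_space s" by unfold_locales
  next
    fix x y
    let ?S = "{n. pr n x \<noteq> 0} \<union> {n. pr n y \<noteq> 0}"
    have f: "finite ?S" using graded_fin[OF g] by simp
    have a: "{n. pr n (x + y) \<noteq> 0} \<subseteq> ?S" using lin_add[OF graded_lin[OF g]] by auto
    show "L0 s pr r (x + y) = L0 s pr r x + L0 s pr r y"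
      unfolding L0_eq_sum[OF g f a] L0_eq_sum[OF g f, of x, OF Un_upper1] L0_eq_sum[OF g f, of y, OF Un_upper2]
      by (auto simp: lin_add[OF graded_lin[OF g]] scale_right_distrib sum.distrib)
  next
    fix c x
    let ?S = "{n. pr n x \<noteq> 0}"
    have f: "finite ?S" using graded_fin[OF g] by simp
    have a: "{n. pr n (s c x) \<noteq> 0} \<subseteq> ?S" using lin_scale[OF graded_lin[OF g]] by auto
    show "L0 s pr r (s c x) = s c (L0 s pr r x)"
      unfolding L0_eq_sum[OF g f a] L0_eq_sum[OF g f, of x, OF order_refl]
      by (auto simp: lin_scale[OF graded_lin[OF g]] scale_sum_right mult.commute)
  qed
qed



lemma sum_only0:
  assumes "\<And>b. 0 < b \<Longrightarrow> f b = 0"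
  shows "sum f {..(k::nat)} = f 0"
proof -
  have "sum f {..k} = sum f {0}"
    by (rule sum.mono_neutral_right) (use assms in auto)
  thus ?thesis by simp
qed

lemma sum_onlyM:
  assumes "\<And>j. j < M \<Longrightarrow> f j = 0"
  shows "sum f {..(M::nat)} = f M"
proof -
  have "sum f {..M} = sum f {M}"
    by (rule sum.mono_neutral_right) (use assms in auto)
  thus ?thesis by simp
qed

lemma lin_comb: "Vector_Spaces.linear s s T \<Longrightarrow> T (s c a + b) = s c (T a) + T b"
  by (simp add: lin_add lin_scale)

lemma nz:
  assumes "CHAR('a::field) = p" "\<not> p dvd B"
  shows "(of_int ((-1) ^ k * int B) :: 'a) \<noteq> 0"
proof -
  have "(of_nat B :: 'a) \<noteq> 0" using assms by (simp add: of_nat_eq_0_iff_char_dvd)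
  thus ?thesis by simp
qed

lemma pow_big: "prime (p::nat) \<Longrightarrow> x < p ^ x"
proof -
  assume "prime p"
  hence "2 \<le> p" by (simp add: prime_ge_2_nat)
  hence "2 ^ x \<le> p ^ x" by (rule power_mono) simp
  moreover have "x < 2 ^ x" by simp
  ultimately show ?thesis by linarith
qed

lemma comm_kill:
  assumes wm: "weight_H_module s pr Lm Lp" and x: "x \<in> hcomp pr n"
    and inv: "\<And>k. k \<ge> 1 \<Longrightarrow> Lp k x = 0 \<and> Lm k x = 0" and M: "1 \<le> M"
  shows "s (of_int ((-1) ^ M * ibinom (- 2 * n) M)) x = 0"
proof -
  have g: "graded s pr" using wm unfolding weight_H_module_def by blast
  interpret vector_space s by (rule graded_vs[OF g])
  have linLp: "Vector_Spaces.linear s s (Lp r)" for r using wm unfolding weight_H_module_def by blast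
  have linLm: "Vector_Spaces.linear s s (Lm r)" for r using wm unfolding weight_H_module_def by blast
  have id0: "Lm 0 y = y" "Lp 0 y = y" for y using wm unfolding weight_H_module_def by blast+
  have rel: "Lp M (Lm M x) =
     (\<Sum>j\<le>min M M. s (of_int ((-1) ^ j * (ibinom (- 2 * n + int M - int M) j)))
                                (Lm (M - j) (Lp (M - j) x)))"
    using wm x unfolding weight_H_module_def by blast
  have "Lp M (Lm M x) = 0" using inv[OF M] lin_zero[OF linLp] by simp
  moreover have "(\<Sum>j\<le>min M M. s (of_int ((-1) ^ j * (ibinom (- 2 * n + int M - int M) j)))
                                (Lm (M - j) (Lp (M - j) x)))
       = s (of_int ((-1) ^ M * ibinom (- 2 * n) M)) x"
  proof -
    have "(\<Sum>j\<le>min M M. s (of_int ((-1) ^ j * (ibinom (- 2 * n + int M - int M) j)))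
                                (Lm (M - j) (Lp (M - j) x)))
       = s (of_int ((-1) ^ M * (ibinom (- 2 * n + int M - int M) M))) (Lm (M - M) (Lp (M - M) x))"
      unfolding min_absorb1[OF order_refl]
    proof (rule sum_onlyM)
      fix j assume "j < M"
      hence "Lp (M - j) x = 0" using inv[of "M - j"] by simp
      thus "s (of_int ((-1) ^ j * (ibinom (- 2 * n + int M - int M) j))) (Lm (M - j) (Lp (M - j) x)) = 0"
        using lin_zero[OF linLm] by simp
    qed
    thus ?thesis using id0 by simp
  qed
  ultimately show ?thesis using rel by simp
qed

lemma exists_M:
  assumes "prime p" "CHAR('a::field) = p" "n \<noteq> 0"
  shows "\<exists>M\<ge>1. (of_int ((-1) ^ M * ibinom (- 2 * n) M) :: 'a) \<noteq> 0"
proof (cases "n < 0")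
  case True
  define M where "M = nat (- 2 * n)"
  have M1: "M \<ge> 1" using True unfolding M_def by simp
  have "- 2 * n = int M" using True unfolding M_def by simp
  hence "ibinom (- 2 * n) M = int 1" using ibinom_self by simp
  moreover have "\<not> p dvd 1" using prime_gt_1_nat[OF assms(1)] by simp
  ultimately show ?thesis using nz[OF assms(2), of 1 M] M1 by metis
next
  case False
  hence np: "n > 0" using assms(3) by simp
  define x0 where "x0 = nat (2 * n - 1)"
  define q where "q = p ^ (x0 + 1)"
  have "x0 + 1 < q" unfolding q_def by (rule pow_big[OF assms(1)])
  hence xq: "x0 < q" by simp
  have q1: "q \<ge> 1" using xq by simp
  have e: "- 2 * n = - int x0 - 1" using np unfolding x0_def by simp
  have "ibinom (- 2 * n) q = (-1) ^ q * int ((x0 + q) choose q)" unfolding e by (rule ibinom_neg)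
  also have "(x0 + q) choose q = (q + x0) choose x0"
    using binomial_symmetric[of q "x0 + q"] by (simp add: add.commute)
  finally have ib: "ibinom (- 2 * n) q = (-1) ^ q * int ((q + x0) choose x0)" .
  have nd: "\<not> p dvd ((q + x0) choose x0)" unfolding q_def by (rule lucas_nd[OF assms(1)]) (use xq q_def in simp)
  have "(of_int ((-1) ^ 0 * int ((q + x0) choose x0)) :: 'a) \<noteq> 0" by (rule nz[OF assms(2) nd])
  hence "(of_int ((-1) ^ q * ibinom (- 2 * n) q) :: 'a) \<noteq> 0" unfolding ib by simp
  thus ?thesis using q1 by blast
qed



theorem proposition4p7:
  fixes p :: nat
    and sV :: "'a::alg_closed_field \<Rightarrow> 'v::ab_group_add \<Rightarrow> 'v"
    and YV :: "'v \<Rightarrow> int \<Rightarrow> 'v \<Rightarrow> 'v" and vac :: 'v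
    and prV :: "int \<Rightarrow> 'v \<Rightarrow> 'v" and LmV LpV :: "nat \<Rightarrow> 'v \<Rightarrow> 'v"
    and sW :: "'a \<Rightarrow> 'w::ab_group_add \<Rightarrow> 'w"
    and YW :: "'v \<Rightarrow> int \<Rightarrow> 'w \<Rightarrow> 'w"
    and prW :: "int \<Rightarrow> 'w \<Rightarrow> 'w" and LmW LpW :: "nat \<Rightarrow> 'w \<Rightarrow> 'w"
  assumes "prime p" and "odd p" and "CHAR('a) = p"
    and "H_module_VA sV YV vac prV LmV LpV"
    and "VH_module sV YV vac prV LmV LpV sW YW prW LmW LpW"
  shows "(\<forall>f\<in>Hom_VH sV YV prV LmV LpV sW YW prW LmW LpW.
            \<forall>g\<in>Hom_VH sV YV prV LmV LpV sW YW prW LmW LpW. \<forall>c.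
              (\<lambda>x. sW c (f x) + g x) \<in> Hom_VH sV YV prV LmV LpV sW YW prW LmW LpW)
       \<and> (\<lambda>x. 0) \<in> Hom_VH sV YV prV LmV LpV sW YW prW LmW LpW
       \<and> bij_betw (\<lambda>f. f vac) (Hom_VH sV YV prV LmV LpV sW YW prW LmW LpW) (H_invariants LmW LpW)
       \<and> H_invariants LmW LpW \<subseteq> hcomp prW 0"
proof -
  note HV = assms(4)[unfolded H_module_VA_def]
  note VH = assms(5)[unfolded VH_module_def]
  have VA: "vertex_algebra sV YV vac" using HV by blast
  have wV: "weight_H_module sV prV LmV LpV" using HV by blast
  have wW: "weight_H_module sW prW LmW LpW" using VH by blast
  have gV: "graded sV prV" using wV unfolding weight_H_module_def by blast
  have gW: "graded sW prW" using wW unfolding weight_H_module_def by blast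
  interpret V: vector_space sV by (rule graded_vs[OF gV])
  interpret W: vector_space sW by (rule graded_vs[OF gW])
  have mV: "va_module sV YV vac sV YV" using VA unfolding vertex_algebra_def by blast
  have mW: "va_module sV YV vac sW YW" using VH by blast
  have YVm1: "\<And>u. YV u (-1) vac = u" using VA unfolding vertex_algebra_def by blast
  have YVvac: "\<And>m v. YV vac m v = (if m = -1 then v else 0)" using mV unfolding va_module_def by blast
  have YWvac: "\<And>m w. YW vac m w = (if m = -1 then w else 0)" using mW unfolding va_module_def by blast
  have linY: "\<And>u m. Vector_Spaces.linear sW sW (YW u m)" using mW unfolding va_module_def by blast
  have linY2: "\<And>m w. Vector_Spaces.linear sV sW (\<lambda>u. YW u m w)" using mW unfolding va_module_def by blast
  have trunc: "\<And>u w. \<exists>N. \<forall>m\<ge>N. YW u m w = 0"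
    using mW unfolding va_module_def truncation_def by blast
  have jac: "\<And>u v w l m n.
     fsum (\<lambda>i::nat. sW (of_int (ibinom m i)) (YW (YV u (l + int i) v) (m + n - int i) w))
     = fsum (\<lambda>i::nat. sW (of_int ((-1) ^ i * (ibinom l i))) (YW u (m + l - int i) (YW v (n + int i) w)))
       - sW (of_int (sgnpow l))
           (fsum (\<lambda>i::nat. sW (of_int ((-1) ^ i * (ibinom l i))) (YW v (n + l - int i) (YW u (m + int i) w))))"
    using mW unfolding va_module_def jacobi_def by blast
  have LmVd: "\<And>n v. LmV n v = YV v (- int n - 1) vac" using HV by blast
  have LpVvac: "\<And>n. LpV n vac = (if n = 0 then vac else 0)" using HV by blast
  have gradW: "\<And>k n m v w. v \<in> hcomp prV k \<Longrightarrow> w \<in> hcomp prW n \<Longrightarrow> YW v m w \<in> hcomp prW (k + n - m - 1)"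
    using VH by blast
  have LmC: "\<And>v w k m. (\<Sum>b\<le>k. sW (of_int ((-1) ^ b)) (LmW (k - b) (YW v m (LmW b w)))) = YW (LmV k v) m w"
    using VH unfolding Lm_conj_def by blast
  have LpC: "\<And>d v w k n. v \<in> hcomp prV d \<Longrightarrow>
     (\<Sum>b\<le>k. sW (of_int ((-1) ^ b)) (LpW (k - b) (YW v n (LpW b w))))
     = (\<Sum>i\<le>k. sW (of_int ((-1) ^ i * (ibinom (int (k - i) - 2 * d + (n + int i) + 1) i)))
                   (YW (LpV (k - i) v) (n + int i) w))"
    using VH unfolding Lp_conj_def by blast
  have linLmW: "\<And>r. Vector_Spaces.linear sW sW (LmW r)" using wW unfolding weight_H_module_def by blast
  have linLpW: "\<And>r. Vector_Spaces.linear sW sW (LpW r)" using wW unfolding weight_H_module_def by blast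
  have linLmV: "\<And>r. Vector_Spaces.linear sV sV (LmV r)" using wV unfolding weight_H_module_def by blast
  have linLpV: "\<And>r. Vector_Spaces.linear sV sV (LpV r)" using wV unfolding weight_H_module_def by blast
  have idW: "\<And>y. LmW 0 y = y \<and> LpW 0 y = y" using wW unfolding weight_H_module_def by blast
  have homLmW: "\<And>n r y. y \<in> hcomp prW n \<Longrightarrow> LmW r y \<in> hcomp prW (n + int r) \<and> LpW r y \<in> hcomp prW (n - int r)"
    using wW unfolding weight_H_module_def by blast
  have linL0W: "\<And>r. Vector_Spaces.linear sW sW (L0 sW prW r)" by (rule L0_lin[OF gW])

  have wb: "\<And>w b. w \<in> H_invariants LmW LpW \<Longrightarrow> b \<ge> 1 \<Longrightarrow> LmW b w = 0 \<and> LpW b w = 0"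
    unfolding H_invariants_def by blast
  have inv_comp: "\<And>w n. w \<in> H_invariants LmW LpW \<Longrightarrow> prW n w \<in> H_invariants LmW LpW"
  proof -
    fix w n assume w: "w \<in> H_invariants LmW LpW"
    have "LmW k (prW n w) = 0 \<and> LpW k (prW n w) = 0" if k: "k \<ge> 1" for k
    proof
      have "prW (n + int k) (LmW k w) = LmW k (prW n w)"
        by (rule graded_map[OF gW gW linLmW]) (use homLmW in blast)
      thus "LmW k (prW n w) = 0" using wb[OF w k] lin_zero[OF graded_lin[OF gW]] by simp
      have "prW (n + - int k) (LpW k w) = LpW k (prW n w)"
      proof (rule graded_map[OF gW gW linLpW])
        fix j y assume "y \<in> hcomp prW j"
        thus "LpW k y \<in> hcomp prW (j + - int k)" using homLmW by simp
      qed
      thus "LpW k (prW n w) = 0" using wb[OF w k] lin_zero[OF graded_lin[OF gW]] by simp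
    qed
    thus "prW n w \<in> H_invariants LmW LpW" unfolding H_invariants_def by blast
  qed
  have W0: "H_invariants LmW LpW \<subseteq> hcomp prW 0"
  proof
    fix w assume w: "w \<in> H_invariants LmW LpW"
    have z: "prW n w = 0" if nn0: "n \<noteq> 0" for n
    proof -
      obtain M where M: "M \<ge> 1" "(of_int ((-1)^M * ibinom (-2*n) M) :: 'a) \<noteq> 0"
        using exists_M[OF assms(1) assms(3) nn0] by blast
      have "sW (of_int ((-1)^M * ibinom (-2*n) M)) (prW n w) = 0"
        by (rule comm_kill[OF wW graded_hcomp[OF gW] _ M(1)]) (use wb[OF inv_comp[OF w]] in blast)
      thus ?thesis using M(2) by simp
    qed
    have "fsum (\<lambda>n. prW n w) = w" using gW unfolding graded_def by blast
    moreover have "fsum (\<lambda>n. prW n w) = prW 0 w" by (rule fsum_single) (use z in auto)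
    ultimately show "w \<in> hcomp prW 0" using graded_hcomp[OF gW, of 0 w] by simp
  qed
  have LmInv: "\<And>w v k m. w \<in> H_invariants LmW LpW \<Longrightarrow> YW (LmV k v) m w = LmW k (YW v m w)"
  proof -
    fix w v k m assume w: "w \<in> H_invariants LmW LpW"
    have "(\<Sum>b\<le>k. sW (of_int ((-1) ^ b)) (LmW (k - b) (YW v m (LmW b w))))
        = sW (of_int ((-1) ^ 0)) (LmW (k - 0) (YW v m (LmW 0 w)))"
    proof (rule sum_only0)
      fix b :: nat assume "0 < b"
      hence "LmW b w = 0" using wb[OF w, of b] by simp
      thus "sW (of_int ((-1) ^ b)) (LmW (k - b) (YW v m (LmW b w))) = 0"
        by (simp add: lin_zero[OF linY] lin_zero[OF linLmW])
    qed
    thus "YW (LmV k v) m w = LmW k (YW v m w)" using LmC idW by simp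
  qed
  have vl: "\<And>w u n. w \<in> H_invariants LmW LpW \<Longrightarrow> 0 \<le> n \<Longrightarrow> YW u n w = 0"
  proof -
    fix w u and n :: int assume w: "w \<in> H_invariants LmW LpW" and n: "0 \<le> n"
    obtain N where N: "\<forall>m\<ge>N. YW u m w = 0" using trunc by blast
    define n0 where "n0 = nat n"
    define q where "q = p ^ (nat N + n0 + 1)"
    have qb: "nat N + n0 + 1 < q" unfolding q_def by (rule pow_big[OF assms(1)])
    define N' where "N' = int n0 + int q"
    define l where "l = - int q - 1"
    have "N' \<ge> N" using qb unfolding N'_def by linarith
    hence A: "YW (LmV q u) N' w = 0" using LmInv[OF w] N lin_zero[OF linLmW] by simp
    have J: "fsum (\<lambda>i::nat. sW (of_int (ibinom 0 i)) (YW (YV u (l + int i) vac) (0 + N' - int i) w))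
     = fsum (\<lambda>i::nat. sW (of_int ((-1) ^ i * (ibinom l i))) (YW u (0 + l - int i) (YW vac (N' + int i) w)))
       - sW (of_int (sgnpow l))
           (fsum (\<lambda>i::nat. sW (of_int ((-1) ^ i * (ibinom l i))) (YW vac (N' + l - int i) (YW u (0 + int i) w))))"
      by (rule jac)
    have L: "fsum (\<lambda>i::nat. sW (of_int (ibinom 0 i)) (YW (YV u (l + int i) vac) (0 + N' - int i) w))
        = YW (LmV q u) N' w"
    proof -
      have "fsum (\<lambda>i::nat. sW (of_int (ibinom 0 i)) (YW (YV u (l + int i) vac) (0 + N' - int i) w))
         = sW (of_int (ibinom 0 0)) (YW (YV u (l + int 0) vac) (0 + N' - int 0) w)"
        by (rule fsum_single) (simp add: ibinom_zero_pos)
      also have "\<dots> = YW (LmV q u) N' w" by (simp add: ibinom_0_0 LmVd l_def)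
      finally show ?thesis .
    qed
    have R1: "fsum (\<lambda>i::nat. sW (of_int ((-1) ^ i * (ibinom l i))) (YW u (0 + l - int i) (YW vac (N' + int i) w))) = 0"
      by (rule fsum_zero) (simp add: YWvac N'_def lin_zero[OF linY])
    have R2: "fsum (\<lambda>i::nat. sW (of_int ((-1) ^ i * (ibinom l i))) (YW vac (N' + l - int i) (YW u (0 + int i) w)))
        = sW (of_int ((-1) ^ n0 * (ibinom l n0))) (YW u (int n0) w)"
    proof -
      have "fsum (\<lambda>i::nat. sW (of_int ((-1) ^ i * (ibinom l i))) (YW vac (N' + l - int i) (YW u (0 + int i) w)))
        = sW (of_int ((-1) ^ n0 * (ibinom l n0))) (YW vac (N' + l - int n0) (YW u (0 + int n0) w))"
        by (rule fsum_single) (auto simp: YWvac N'_def l_def)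
      also have "\<dots> = sW (of_int ((-1) ^ n0 * (ibinom l n0))) (YW u (int n0) w)"
        by (simp add: YWvac N'_def l_def)
      finally show ?thesis .
    qed
    have E: "sW (of_int (sgnpow l)) (sW (of_int ((-1) ^ n0 * (ibinom l n0))) (YW u (int n0) w)) = 0"
      using J L R1 R2 A by simp
    have s1: "(of_int (sgnpow l) :: 'a) \<noteq> 0" unfolding sgnpow_def by simp
    have nq: "n0 < p ^ (nat N + n0 + 1)" using qb unfolding q_def by simp
    have nd: "\<not> p dvd ((q + n0) choose n0)" unfolding q_def by (rule lucas_nd[OF assms(1) nq])
    have c0: "(of_int ((-1) ^ 0 * int ((q + n0) choose n0)) :: 'a) \<noteq> 0" by (rule nz[OF assms(3) nd])
    have ib: "ibinom l n0 = (-1) ^ n0 * int ((q + n0) choose n0)" unfolding l_def by (rule ibinom_neg)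
    have c1: "(of_int ((-1) ^ n0 * (ibinom l n0)) :: 'a) \<noteq> 0" using c0 unfolding ib by simp
    have "YW u (int n0) w = 0" using E s1 c1 by simp
    thus "YW u n w = 0" using n unfolding n0_def by simp
  qed

  have LpInvH: "\<And>w v d k. w \<in> H_invariants LmW LpW \<Longrightarrow> v \<in> hcomp prV d \<Longrightarrow>
      YW (LpV k v) (-1) w = LpW k (YW v (-1) w)"
  proof -
    fix w v d k assume w: "w \<in> H_invariants LmW LpW" and v: "v \<in> hcomp prV d"
    have e: "(\<Sum>b\<le>k. sW (of_int ((-1) ^ b)) (LpW (k - b) (YW v (-1) (LpW b w))))
     = (\<Sum>i\<le>k. sW (of_int ((-1) ^ i * (ibinom (int (k - i) - 2 * d + (-1 + int i) + 1) i)))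
                   (YW (LpV (k - i) v) (-1 + int i) w))" by (rule LpC[OF v])
    have "(\<Sum>b\<le>k. sW (of_int ((-1) ^ b)) (LpW (k - b) (YW v (-1) (LpW b w))))
        = sW (of_int ((-1) ^ 0)) (LpW (k - 0) (YW v (-1) (LpW 0 w)))"
    proof (rule sum_only0)
      fix b :: nat assume "0 < b"
      hence "LpW b w = 0" using wb[OF w, of b] by simp
      thus "sW (of_int ((-1) ^ b)) (LpW (k - b) (YW v (-1) (LpW b w))) = 0"
        by (simp add: lin_zero[OF linY] lin_zero[OF linLpW])
    qed
    hence e1: "(\<Sum>b\<le>k. sW (of_int ((-1) ^ b)) (LpW (k - b) (YW v (-1) (LpW b w)))) = LpW k (YW v (-1) w)"
      using idW by simp
    have "(\<Sum>i\<le>k. sW (of_int ((-1) ^ i * (ibinom (int (k - i) - 2 * d + (-1 + int i) + 1) i)))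
                   (YW (LpV (k - i) v) (-1 + int i) w))
      = sW (of_int ((-1) ^ 0 * (ibinom (int (k - 0) - 2 * d + (-1 + int 0) + 1) 0)))
                   (YW (LpV (k - 0) v) (-1 + int 0) w)"
    proof (rule sum_only0)
      fix i :: nat assume "0 < i"
      hence "YW (LpV (k - i) v) (-1 + int i) w = 0" using vl[OF w] by simp
      thus "sW (of_int ((-1) ^ i * (ibinom (int (k - i) - 2 * d + (-1 + int i) + 1) i)))
                   (YW (LpV (k - i) v) (-1 + int i) w) = 0" by simp
    qed
    hence e2: "(\<Sum>i\<le>k. sW (of_int ((-1) ^ i * (ibinom (int (k - i) - 2 * d + (-1 + int i) + 1) i)))
                   (YW (LpV (k - i) v) (-1 + int i) w)) = YW (LpV k v) (-1) w"
      by (simp add: ibinom_0_0)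
    show "YW (LpV k v) (-1) w = LpW k (YW v (-1) w)" using e e1 e2 by simp
  qed
  have surj_hom: "(\<lambda>v. YW v (-1) w) \<in> Hom_VH sV YV prV LmV LpV sW YW prW LmW LpW"
    if w: "w \<in> H_invariants LmW LpW" for w
    unfolding Hom_VH_def
  proof (intro CollectI conjI allI)
    have w0: "w \<in> hcomp prW 0" using W0 w by blast
    show "Vector_Spaces.linear sV sW (\<lambda>v. YW v (-1) w)" by (rule linY2)
  next
    fix u m v
    have J: "fsum (\<lambda>i::nat. sW (of_int (ibinom 0 i)) (YW (YV u (m + int i) v) (0 + -1 - int i) w))
     = fsum (\<lambda>i::nat. sW (of_int ((-1) ^ i * (ibinom m i))) (YW u (0 + m - int i) (YW v (-1 + int i) w)))
       - sW (of_int (sgnpow m))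
           (fsum (\<lambda>i::nat. sW (of_int ((-1) ^ i * (ibinom m i))) (YW v (-1 + m - int i) (YW u (0 + int i) w))))"
      by (rule jac)
    have L: "fsum (\<lambda>i::nat. sW (of_int (ibinom 0 i)) (YW (YV u (m + int i) v) (0 + -1 - int i) w))
       = YW (YV u m v) (-1) w"
    proof -
      have "fsum (\<lambda>i::nat. sW (of_int (ibinom 0 i)) (YW (YV u (m + int i) v) (0 + -1 - int i) w))
         = sW (of_int (ibinom 0 0)) (YW (YV u (m + int 0) v) (0 + -1 - int 0) w)"
        by (rule fsum_single) (simp add: ibinom_zero_pos)
      thus ?thesis by (simp add: ibinom_0_0)
    qed
    have R1: "fsum (\<lambda>i::nat. sW (of_int ((-1) ^ i * (ibinom m i))) (YW u (0 + m - int i) (YW v (-1 + int i) w)))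
       = YW u m (YW v (-1) w)"
    proof -
      have "fsum (\<lambda>i::nat. sW (of_int ((-1) ^ i * (ibinom m i))) (YW u (0 + m - int i) (YW v (-1 + int i) w)))
        = sW (of_int ((-1) ^ 0 * (ibinom m 0))) (YW u (0 + m - int 0) (YW v (-1 + int 0) w))"
      proof (rule fsum_single)
        fix i :: nat assume "i \<noteq> 0"
        hence "YW v (-1 + int i) w = 0" using vl[OF w] by simp
        thus "sW (of_int ((-1) ^ i * (ibinom m i))) (YW u (0 + m - int i) (YW v (-1 + int i) w)) = 0"
          by (simp add: lin_zero[OF linY])
      qed
      thus ?thesis by (simp add: ibinom_0_0)
    qed
    have R2: "fsum (\<lambda>i::nat. sW (of_int ((-1) ^ i * (ibinom m i))) (YW v (-1 + m - int i) (YW u (0 + int i) w))) = 0"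
    proof (rule fsum_zero)
      fix i :: nat
      have "YW u (0 + int i) w = 0" using vl[OF w] by simp
      thus "sW (of_int ((-1) ^ i * (ibinom m i))) (YW v (-1 + m - int i) (YW u (0 + int i) w)) = 0"
        by (simp add: lin_zero[OF linY])
    qed
    show "YW (YV u m v) (-1) w = YW u m (YW v (-1) w)" using J L R1 R2 by simp
  next
    fix r v show "YW (LmV r v) (-1) w = LmW r (YW v (-1) w)" by (rule LmInv[OF w])
  next
    fix r v
    define S where "S = {d. prV d v \<noteq> 0}"
    have e: "(\<Sum>d\<in>S. prV d v) = v" unfolding S_def by (rule graded_decomp[OF gV])
    have "YW (LpV r v) (-1) w = YW (LpV r (\<Sum>d\<in>S. prV d v)) (-1) w" by (simp only: e)
    also have "\<dots> = YW (\<Sum>d\<in>S. LpV r (prV d v)) (-1) w"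
      by (simp only: lin_sum[OF linLpV, of r])
    also have "\<dots> = (\<Sum>d\<in>S. YW (LpV r (prV d v)) (-1) w)"
      by (rule lin_sum[OF linY2[of "-1" w], of "\<lambda>d. LpV r (prV d v)" S, simplified])
    also have "\<dots> = (\<Sum>d\<in>S. LpW r (YW (prV d v) (-1) w))"
      by (rule sum.cong) (auto intro: LpInvH[OF w graded_hcomp[OF gV]])
    also have "\<dots> = LpW r (\<Sum>d\<in>S. YW (prV d v) (-1) w)"
      by (simp only: lin_sum[OF linLpW, of r])
    also have "\<dots> = LpW r (YW (\<Sum>d\<in>S. prV d v) (-1) w)"
      using lin_sum[OF linY2[of "-1" w], of "\<lambda>d. prV d v" S, simplified] by simp
    also have "\<dots> = LpW r (YW v (-1) w)" by (simp only: e)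
    finally show "YW (LpV r v) (-1) w = LpW r (YW v (-1) w)" .
  next
    fix r v
    have w0: "w \<in> hcomp prW 0" using W0 w by blast
    have fpr: "YW (prV n x) (-1) w = prW n (YW x (-1) w)" for n x
    proof -
      have "prW (n + 0) ((\<lambda>u. YW u (-1) w) x) = (\<lambda>u. YW u (-1) w) (prV n x)"
      proof (rule graded_map[OF gV gW linY2])
        fix k y assume "y \<in> hcomp prV k"
        from gradW[OF this w0, of "-1"] show "(\<lambda>u. YW u (-1) w) y \<in> hcomp prW (k + 0)" by simp
      qed
      thus ?thesis by simp
    qed
    define S where "S = {n. prV n v \<noteq> 0}"
    have fS: "finite S" unfolding S_def by (rule graded_fin[OF gV])
    have sub: "{n. prW n (YW v (-1) w) \<noteq> 0} \<subseteq> S"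
    proof
      fix n assume "n \<in> {n. prW n (YW v (-1) w) \<noteq> 0}"
      hence "YW (prV n v) (-1) w \<noteq> 0" by (simp add: fpr)
      moreover have "YW 0 (-1) w = 0" using lin_zero[OF linY2[of "-1" w]] by simp
      ultimately show "n \<in> S" unfolding S_def by auto
    qed
    have "YW (L0 sV prV r v) (-1) w
        = YW (\<Sum>n\<in>S. sV (of_int (ibinom (- 2 * n) r)) (prV n v)) (-1) w"
      by (simp only: L0_eq_sum[OF gV fS, of v, unfolded S_def, OF order_refl, folded S_def])
    also have "\<dots> = (\<Sum>n\<in>S. sW (of_int (ibinom (- 2 * n) r)) (YW (prV n v) (-1) w))"
      using lin_sum[OF linY2[of "-1" w], of "\<lambda>n. sV (of_int (ibinom (- 2 * n) r)) (prV n v)" S, simplified]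
        lin_scale[OF linY2[of "-1" w], simplified] by simp
    also have "\<dots> = (\<Sum>n\<in>S. sW (of_int (ibinom (- 2 * n) r)) (prW n (YW v (-1) w)))"
      by (simp add: fpr)
    also have "\<dots> = L0 sW prW r (YW v (-1) w)"
      by (rule L0_eq_sum[OF gW fS sub, symmetric])
    finally show "YW (L0 sV prV r v) (-1) w = L0 sW prW r (YW v (-1) w)" .
  qed

  let ?H = "Hom_VH sV YV prV LmV LpV sW YW prW LmW LpW"
  have P1: "\<forall>f\<in>?H. \<forall>g\<in>?H. \<forall>c. (\<lambda>x. sW c (f x) + g x) \<in> ?H"
  proof (intro ballI allI)
    fix f g c assume f: "f \<in> ?H" and g: "g \<in> ?H"
    note fH = f[unfolded Hom_VH_def, simplified]
    note gH = g[unfolded Hom_VH_def, simplified]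
    have lf: "Vector_Spaces.linear sV sW f" using fH by blast
    have lg: "Vector_Spaces.linear sV sW g" using gH by blast
    show "(\<lambda>x. sW c (f x) + g x) \<in> ?H"
      unfolding Hom_VH_def
    proof (intro CollectI conjI allI)
      show "Vector_Spaces.linear sV sW (\<lambda>x. sW c (f x) + g x)"
        unfolding Vector_Spaces.linear_iff
      proof (intro conjI allI)
        show "vector_space sV" by unfold_locales
        show "vector_space sW" by unfold_locales
      next
        fix x y show "sW c (f (x + y)) + g (x + y) = sW c (f x) + g x + (sW c (f y) + g y)"
          by (simp add: lin_add[OF lf] lin_add[OF lg] W.scale_right_distrib algebra_simps)
      next
        fix a x show "sW c (f (sV a x)) + g (sV a x) = sW a (sW c (f x) + g x)"
          by (simp add: lin_scale[OF lf] lin_scale[OF lg] W.scale_right_distrib mult.commute)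
      qed
    next
      fix u m v show "sW c (f (YV u m v)) + g (YV u m v) = YW u m (sW c (f v) + g v)"
        using fH gH by (simp add: lin_comb[OF linY])
    next
      fix r v show "sW c (f (LmV r v)) + g (LmV r v) = LmW r (sW c (f v) + g v)"
        using fH gH by (simp add: lin_comb[OF linLmW])
    next
      fix r v show "sW c (f (LpV r v)) + g (LpV r v) = LpW r (sW c (f v) + g v)"
        using fH gH by (simp add: lin_comb[OF linLpW])
    next
      fix r v show "sW c (f (L0 sV prV r v)) + g (L0 sV prV r v) = L0 sW prW r (sW c (f v) + g v)"
        using fH gH by (simp add: lin_comb[OF linL0W])
    qed
  qed
  have P2: "(\<lambda>x. 0) \<in> ?H"
    unfolding Hom_VH_def
  proof (intro CollectI conjI allI)
    show "Vector_Spaces.linear sV sW (\<lambda>x. 0)"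
      unfolding Vector_Spaces.linear_iff
    proof (intro conjI allI)
      show "vector_space sV" by unfold_locales
      show "vector_space sW" by unfold_locales
    qed simp_all
  qed (simp_all add: lin_zero[OF linY] lin_zero[OF linLmW] lin_zero[OF linLpW] lin_zero[OF linL0W])
  have img: "f vac \<in> H_invariants LmW LpW" if f: "f \<in> ?H" for f
  proof -
    note fH = f[unfolded Hom_VH_def, simplified]
    have lf: "Vector_Spaces.linear sV sW f" using fH by blast
    have "LpW n (f vac) = 0 \<and> LmW n (f vac) = 0" if n: "n \<ge> 1" for n
    proof
      have "LpW n (f vac) = f (LpV n vac)" using fH by simp
      thus "LpW n (f vac) = 0" using LpVvac n lin_zero[OF lf] by simp
      have "LmW n (f vac) = f (LmV n vac)" using fH by simp
      also have "\<dots> = f (YV vac (- int n - 1) vac)" by (simp add: LmVd)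
      also have "\<dots> = 0" using n YVvac lin_zero[OF lf] by simp
      finally show "LmW n (f vac) = 0" .
    qed
    thus ?thesis unfolding H_invariants_def by blast
  qed
  have inj: "inj_on (\<lambda>f. f vac) ?H"
  proof (rule inj_onI)
    fix f g assume f: "f \<in> ?H" and g: "g \<in> ?H" and e: "f vac = g vac"
    note fH = f[unfolded Hom_VH_def, simplified]
    note gH = g[unfolded Hom_VH_def, simplified]
    show "f = g"
    proof
      fix v
      have "f v = f (YV v (-1) vac)" by (simp add: YVm1)
      also have "\<dots> = YW v (-1) (f vac)" using fH by blast
      also have "\<dots> = YW v (-1) (g vac)" by (simp add: e)
      also have "\<dots> = g (YV v (-1) vac)" using gH by simp
      also have "\<dots> = g v" by (simp add: YVm1)
      finally show "f v = g v" .
    qed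
  qed
  have P3: "bij_betw (\<lambda>f. f vac) ?H (H_invariants LmW LpW)"
    unfolding bij_betw_def
  proof
    show "inj_on (\<lambda>f. f vac) ?H" by (rule inj)
    show "(\<lambda>f. f vac) ` ?H = H_invariants LmW LpW"
    proof
      show "(\<lambda>f. f vac) ` ?H \<subseteq> H_invariants LmW LpW" using img by blast
    next
      show "H_invariants LmW LpW \<subseteq> (\<lambda>f. f vac) ` ?H"
      proof
        fix w assume w: "w \<in> H_invariants LmW LpW"
        have "w = (\<lambda>v. YW v (-1) w) vac" by (simp add: YWvac)
        thus "w \<in> (\<lambda>f. f vac) ` ?H" using surj_hom[OF w] by (rule image_eqI)
      qed
    qed
  qed
  show ?thesis using P1 P2 P3 W0 by blast
qed


end
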